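(* Let $T_1=(Q_1,\Sigma,\Delta,R_1,q_1^0)$ and $T_2=(Q_2,\Delta,\Omega,R_2,q_2^0)$ be top-down tree transducers, let $A$ be the domain automaton of $T_2$, and let $\hat{T}_1$ be the product construction of $T_1$ and $A$. If a state $(q,S)$ of $\hat{T}_1$ produces a tree $t\in T_\Delta$ on some input $s\in T_\Sigma$ and $S\neq\emptyset$, then $t\in\bigcap_{q_2\in S}\text{dom}(q_2)$.
   Context: A top-down tree transducer $T=(Q,\Sigma,\Delta,R,q_0)$ has finite state set $Q$, ranked input/output alphabets $\Sigma,\Delta$, initial state $q_0$, and finite rule set $R$ of rules $q(a(x_1,\dots,x_k))\to t$ with $a\in\Sigma_k$ ($\Sigma_k$ = symbols of rank $k$) and $t$ a tree over $\Delta$ whose leaves may additionally be of the form $q'(x_i)$, $q'\in Q$, $i\in[k]$; rules are used as rewrite rules in the usual way. A state $q$ produces $t$ on input $s$ if the tree $t$ over $\Delta$ is derivable from $q(s)$; $\text{dom}(q)$ is the set of inputs on which $q$ produces some tree. For $q\in Q$, $a\in\Sigma_k$, $\text{rhs}_T(q,a)$ is the set of right-hand sides of rules with left-hand side $q(a(x_1,\dots,x_k))$; for a set $\Gamma$ of right-hand sides, $\Gamma[x_i]$ is the set of $q'\in Q$ with $q'(x_i)$ occurring in some tree of $\Gamma$. Domain automaton of $T$: the top-down tree automaton (transducer over $\Sigma$ with rules of the form $p(a(x_1,\dots,x_k))\to a(p_1(x_1),\dots,p_k(x_k))$) with states all subsets of $Q$, initial state $\{q_0\}$, rules $S(a(x_1,\dots,x_k))\to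 a(S_1(x_1),\dots,S_k(x_k))$ for every $a\in\Sigma_k$, nonempty $S=\{q_1,\dots,q_n\}\subseteq Q$ and nonempty $\Gamma_j\subseteq\text{rhs}_T(q_j,a)$ ($j\in[n]$), where $S_i=\bigcup_j\Gamma_j[x_i]$, and rules $\emptyset(a(x_1,\dots,x_k))\to a(\emptyset(x_1),\dots,\emptyset(x_k))$ for all $a$. Product construction of transducers $T=(Q,\Sigma,\Delta,R,q_0)$ and $T'=(Q',\Delta,\Omega,R',q'_0)$: the transducer with states $Q\times Q'$, input $\Sigma$, output $\Omega$, initial state $(q_0,q'_0)$, and, for every rule $q(a(x_1,\dots,x_k))\to\xi$ of $T$, every $p\in Q'$ and every tree $\zeta$ derivable from $p(\xi)$ using rules of $T'$ in which the leaves of $\xi$ of the form $q''(x_i)$ are treated as unrewritable symbols and a state $p'$ applied to such a leaf stays as $p'(q''(x_i))$ (so $\zeta$ is a tree over $\Omega$ with leaves possibly of the form $p'(q''(x_i))$), the rule $(q,p)(a(x_1,\dots,x_k))\to\zeta'$, where $\zeta'$ is obtained from $\zeta$ by replacing each $p'(q''(x_i))$ by $(q'',p')(x_i)$. *)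

theory Defs
  imports Main
begin

datatype 'f tree = Node 'f "'f tree list"

datatype ('f, 'v) "term" = Var 'v | Fun 'f "('f, 'v) term list"

fun wf_tree :: "('f \<times> nat) set \<Rightarrow> 'f tree \<Rightarrow> bool" where
  "wf_tree \<Sigma> (Node f ts) = ((f, length ts) \<in> \<Sigma> \<and> (\<forall>t\<in>set ts. wf_tree \<Sigma> t))"

definition trees :: "('f \<times> nat) set \<Rightarrow> 'f tree set" where
  "trees \<Sigma> = {t. wf_tree \<Sigma> t}"

fun tterm :: "'f tree \<Rightarrow> ('f, 'v) term" where
  "tterm (Node f ts) = Fun f (map tterm ts)"

fun vars_term :: "('f, 'v) term \<Rightarrow> 'v set" where
  "vars_term (Var v) = {v}"
| "vars_term (Fun f ts) = (\<Union>t\<in>set ts. vars_term t)"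

fun subst :: "('v \<Rightarrow> ('f, 'w) term) \<Rightarrow> ('f, 'v) term \<Rightarrow> ('f, 'w) term" where
  "subst \<sigma> (Var v) = \<sigma> v"
| "subst \<sigma> (Fun f ts) = Fun f (map (subst \<sigma>) ts)"

fun wf_term :: "('f \<times> nat) set \<Rightarrow> 'v set \<Rightarrow> ('f, 'v) term \<Rightarrow> bool" where
  "wf_term \<Sigma> V (Var v) = (v \<in> V)"
| "wf_term \<Sigma> V (Fun f ts) = ((f, length ts) \<in> \<Sigma> \<and> (\<forall>t\<in>set ts. wf_term \<Sigma> V t))"

text \<open>A rule (q, (a,k), \<xi>) stands for q(a(x_1,...,x_k)) \<rightarrow> \<xi>; in \<xi> the leaf
Var (q', i) stands for q'(x_{i+1}), i.e. variables are indexed from 0 (i < k).\<close>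

record ('q, 'f, 'g) tdtt =
  states :: "'q set"
  inp :: "('f \<times> nat) set"
  out :: "('g \<times> nat) set"
  rules :: "('q \<times> ('f \<times> nat) \<times> ('g, 'q \<times> nat) term) set"
  init :: 'q

definition wf_tdtt :: "('q, 'f, 'g) tdtt \<Rightarrow> bool" where
  "wf_tdtt T \<longleftrightarrow> finite (states T) \<and> finite (inp T) \<and> finite (out T) \<and> finite (rules T)
     \<and> init T \<in> states T
     \<and> (\<forall>(q, (a, k), \<xi>) \<in> rules T. q \<in> states T \<and> (a, k) \<in> inp T
            \<and> wf_term (out T) (states T \<times> {..<k}) \<xi>)"

definition rhs :: "('q, 'f, 'g) tdtt \<Rightarrow> 'q \<Rightarrow> 'f \<times> nat \<Rightarrow> ('g, 'q \<times> nat) term set" where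
  "rhs T q ak = {\<xi>. (q, ak, \<xi>) \<in> rules T}"

text \<open>\<Gamma>[x_i]: the states applied to x_i in some tree of \<Gamma> (0-based index i).\<close>
definition states_at :: "('g, 'q \<times> nat) term set \<Rightarrow> nat \<Rightarrow> 'q set" where
  "states_at \<Gamma> i = {q'. \<exists>\<xi>\<in>\<Gamma>. (q', i) \<in> vars_term \<xi>}"

text \<open>A sentential form is an output term
whose leaves may be of the form q(u) (represented by Var (q, u)), u an input term
(possibly containing unrewritable leaves of type 'v).\<close>

definition inst :: "('f, 'v) term list \<Rightarrow> ('g, 'q \<times> nat) term \<Rightarrow> ('g, 'q \<times> ('f, 'v) term) term" where
  "inst ss \<xi> = subst (\<lambda>(q', i). Var (q', ss ! i)) \<xi>"

inductive_set step :: "('q, 'f, 'g) tdtt \<Rightarrow> (('g, 'q \<times> ('f, 'v) term) term \<times> ('g, 'q \<times> ('f, 'v) term) term) set"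
  for T where
  root: "(q, (a, length ss), \<xi>) \<in> rules T \<Longrightarrow> (Var (q, Fun a ss), inst ss \<xi>) \<in> step T"
| ctxt: "(u, u') \<in> step T \<Longrightarrow> (Fun f (ls @ u # rs), Fun f (ls @ u' # rs)) \<in> step T"

definition produces :: "('q, 'f, 'g) tdtt \<Rightarrow> 'q \<Rightarrow> 'f tree \<Rightarrow> 'g tree \<Rightarrow> bool" where
  "produces T q s t \<longleftrightarrow> t \<in> trees (out T) \<and>
     (Var (q, tterm s :: ('f, unit) term), tterm t) \<in> (step T)\<^sup>*"

definition dom_st :: "('q, 'f, 'g) tdtt \<Rightarrow> 'q \<Rightarrow> 'f tree set" where
  "dom_st T q = {s \<in> trees (inp T). \<exists>t. produces T q s t}"

definition domaut :: "('q, 'f, 'g) tdtt \<Rightarrow> ('q set, 'f, 'f) tdtt" where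
  "domaut T = \<lparr> states = Pow (states T), inp = inp T, out = inp T,
     rules =
       {(S, (a, k), Fun a (map (\<lambda>i. Var (\<Union>q\<in>S. states_at (\<Gamma> q) i, i)) [0..<k])) | S a k \<Gamma>.
          (a, k) \<in> inp T \<and> S \<subseteq> states T \<and> S \<noteq> {} \<and>
          (\<forall>q\<in>S. \<Gamma> q \<noteq> {} \<and> \<Gamma> q \<subseteq> rhs T q (a, k))}
       \<union> {({}, (a, k), Fun a (map (\<lambda>i. Var ({}, i)) [0..<k])) | a k. (a, k) \<in> inp T},
     init = {init T} \<rparr>"

definition fold_leaf :: "'p \<times> ('g, 'q \<times> nat) term \<Rightarrow> ('h, ('q \<times> 'p) \<times> nat) term" where
  "fold_leaf x = (case x of (p', Var (q'', i)) \<Rightarrow> Var ((q'', p'), i) | _ \<Rightarrow> undefined)"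

definition product :: "('q, 'f, 'g) tdtt \<Rightarrow> ('p, 'g, 'h) tdtt \<Rightarrow> ('q \<times> 'p, 'f, 'h) tdtt" where
  "product T T' = \<lparr> states = states T \<times> states T', inp = inp T, out = out T',
     rules =
       {((q, p), (a, k), subst fold_leaf \<zeta>) | q p a k \<xi> \<zeta>.
          (q, (a, k), \<xi>) \<in> rules T \<and> p \<in> states T' \<and>
          (Var (p, \<xi>), \<zeta>) \<in> (step T')\<^sup>* \<and>
          (\<forall>x\<in>vars_term \<zeta>. \<exists>p' q'' i. x = (p', Var (q'', i)))},
     init = (init T, init T') \<rparr>"

end

theory Submission
  imports Defs
begin

fun Q :: "('q \<Rightarrow> 'g tree \<Rightarrow> bool) \<Rightarrow> ('g, 'q \<times> 'x) term \<Rightarrow> 'g tree \<Rightarrow> bool" where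
  "Q G (Var (q, x)) t = G q t"
| "Q G (Fun f us) (Node g ts) = (f = g \<and> list_all2 (Q G) us ts)"

lemma Q_tterm: "Q G (tterm t) t"
proof (induction t)
  case (Node f ts)
  then show ?case by (auto simp: list_all2_conv_all_nth)
qed

lemma Q_inst: "Q G (inst ss \<xi>) t = Q G \<xi> t"
proof (induction \<xi> arbitrary: t)
  case (Var x)
  then show ?case by (cases x) (simp add: inst_def)
next
  case (Fun f us)
  obtain g ts where t: "t = Node g ts" by (cases t)
  have "list_all2 (Q G) (map (inst ss) us) ts = list_all2 (Q G) us ts"
    using Fun by (auto simp: list_all2_conv_all_nth)
  then show ?case using t by (simp add: inst_def cong: map_cong)
qed

lemma Q_step:
  assumes cond: "\<forall>p a k \<xi> t. (p, (a, k), \<xi>) \<in> rules U \<longrightarrow> Q G \<xi> t \<longrightarrow> G p t"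
  shows "(u, v) \<in> step U \<Longrightarrow> Q G v t \<Longrightarrow> Q G u t"
proof (induction u v arbitrary: t rule: step.induct)
  case (root q a ss \<xi>)
  then have "Q G \<xi> t" by (simp add: Q_inst)
  then show ?case using cond root(1) by simp
next
  case (ctxt u u' f ls rs)
  obtain g ts where t: "t = Node g ts" by (cases t)
  with ctxt.prems have fg: "f = g" and la: "list_all2 (Q G) (ls @ u' # rs) ts" by auto
  from la obtain ts1 ts2 where ts: "ts = ts1 @ ts2" and l1: "list_all2 (Q G) ls ts1"
    and l2: "list_all2 (Q G) (u' # rs) ts2"
    by (auto simp: list_all2_append1)
  from l2 obtain t0 ts3 where "ts2 = t0 # ts3" "Q G u' t0" "list_all2 (Q G) rs ts3"
    by (auto simp: list_all2_Cons1)
  with ctxt.IH have "list_all2 (Q G) (ls @ u # rs) ts" using ts l1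
    by (simp add: list_all2_appendI)
  then show ?case using t fg by simp
qed

lemma Q_steps:
  assumes cond: "\<forall>p a k \<xi> t. (p, (a, k), \<xi>) \<in> rules U \<longrightarrow> Q G \<xi> t \<longrightarrow> G p t"
  shows "(u, v) \<in> (step U)\<^sup>* \<Longrightarrow> Q G v t \<Longrightarrow> Q G u t"
proof (induction u rule: converse_rtrancl_induct)
  case base
  then show ?case .
next
  case (step y z)
  then show ?case using Q_step[of U G, OF cond] by blast
qed

fun tsubst :: "('v \<Rightarrow> 'h tree) \<Rightarrow> ('h, 'v) term \<Rightarrow> 'h tree" where
  "tsubst \<sigma> (Var x) = \<sigma> x"
| "tsubst \<sigma> (Fun f ts) = Node f (map (tsubst \<sigma>) ts)"

lemma wf_tsubst: "wf_term Oa V \<xi> \<Longrightarrow> (\<forall>x\<in>vars_term \<xi>. wf_tree Oa (\<sigma> x)) \<Longrightarrow> wf_tree Oa (tsubst \<sigma> \<xi>)"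
  by (induction \<xi>) auto

lemma wf_vars: "wf_term Oa V \<xi> \<Longrightarrow> vars_term \<xi> \<subseteq> V"
  by (induction \<xi>) auto

lemma steps_ctxt1: "(u, v) \<in> (step U)\<^sup>* \<Longrightarrow> (Fun f (ls @ u # rs), Fun f (ls @ v # rs)) \<in> (step U)\<^sup>*"
proof (induction rule: rtrancl_induct)
  case base then show ?case by simp
next
  case (step y z)
  then show ?case using step.ctxt by (metis rtrancl.rtrancl_into_rtrancl)
qed

lemma steps_args_gen: "list_all2 (\<lambda>u v. (u, v) \<in> (step U)\<^sup>*) us vs \<Longrightarrow>
   (Fun f (ls @ us), Fun f (ls @ vs)) \<in> (step U)\<^sup>*"
proof (induction us vs arbitrary: ls rule: list_all2_induct)
  case Nil then show ?case by simp
next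
  case (Cons u us v vs)
  have "(Fun f (ls @ u # us), Fun f (ls @ v # us)) \<in> (step U)\<^sup>*"
    using Cons.hyps(1) by (rule steps_ctxt1)
  moreover have "(Fun f ((ls @ [v]) @ us), Fun f ((ls @ [v]) @ vs)) \<in> (step U)\<^sup>*"
    by (rule Cons.IH)
  ultimately show ?case by simp
qed

lemma steps_args: "list_all2 (\<lambda>u v. (u, v) \<in> (step U)\<^sup>*) us vs \<Longrightarrow>
   (Fun f us, Fun f vs) \<in> (step U)\<^sup>*"
  using steps_args_gen[where ls = "[]"] by simp

lemma inst_steps:
  assumes "\<forall>(q', i)\<in>vars_term \<xi>. i < length ts \<and>
      (Var (q', tterm (ts ! i) :: ('g, unit) term), tterm (\<sigma> (q', i))) \<in> (step U)\<^sup>*"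
  shows "(inst (map tterm ts :: ('g, unit) term list) \<xi>, tterm (tsubst \<sigma> \<xi>)) \<in> (step U)\<^sup>*"
  using assms
proof (induction \<xi>)
  case (Var x)
  then show ?case by (cases x) (auto simp: inst_def)
next
  case (Fun f us)
  have "list_all2 (\<lambda>u v. (u, v) \<in> (step U)\<^sup>*) (map (inst (map tterm ts :: ('g, unit) term list)) us)
          (map (\<lambda>u. tterm (tsubst \<sigma> u)) us)"
    unfolding list_all2_conv_all_nth
  proof (intro conjI allI impI)
    fix i assume i: "i < length (map (inst (map tterm ts :: ('g, unit) term list)) us)"
    hence m: "us ! i \<in> set us" by simp
    have "\<forall>(q', i)\<in>vars_term (us ! i). i < length ts \<and>
      (Var (q', tterm (ts ! i) :: ('g, unit) term), tterm (\<sigma> (q', i))) \<in> (step U)\<^sup>*"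
      using Fun.prems m by auto
    from Fun.IH[OF m this] show "(map (inst (map tterm ts :: ('g, unit) term list)) us ! i,
          map (\<lambda>u. tterm (tsubst \<sigma> u)) us ! i) \<in> (step U)\<^sup>*" using i by simp
  qed simp
  moreover have "inst (map tterm ts :: ('g, unit) term list) (Fun f us) = Fun f (map (inst (map tterm ts :: ('g, unit) term list)) us)"
    by (simp add: inst_def)
  ultimately show ?case using steps_args by (simp add: o_def)
qed

lemma T2_produces:
  assumes wf: "wf_tdtt T2" and r: "(q2, (a, length ts), \<xi>) \<in> rules T2"
    and h: "\<forall>(q', i)\<in>vars_term \<xi>. \<exists>t'. produces T2 q' (ts ! i) t'"
  shows "\<exists>t'. produces T2 q2 (Node a ts) t'"
proof -
  define \<sigma> where "\<sigma> = (\<lambda>(q', i). SOME t'. produces T2 q' (ts ! i) t')"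
  have wft: "wf_term (out T2) (states T2 \<times> {..<length ts}) \<xi>"
    using wf r unfolding wf_tdtt_def by fastforce
  hence vs: "vars_term \<xi> \<subseteq> states T2 \<times> {..<length ts}" by (rule wf_vars)
  have pr: "\<forall>(q', i)\<in>vars_term \<xi>. produces T2 q' (ts ! i) (\<sigma> (q', i))"
    using h unfolding \<sigma>_def by (auto intro: someI_ex)
  have "\<forall>x\<in>vars_term \<xi>. wf_tree (out T2) (\<sigma> x)"
    using pr by (fastforce simp: produces_def trees_def)
  hence "wf_tree (out T2) (tsubst \<sigma> \<xi>)"
    using wf_tsubst[OF wft, of \<sigma>] by blast
  moreover have "(inst (map tterm ts :: (_, unit) term list) \<xi>, tterm (tsubst \<sigma> \<xi>)) \<in> (step T2)\<^sup>*"
    apply (rule inst_steps)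
    using pr vs by (auto simp: produces_def)
  moreover have "(Var (q2, tterm (Node a ts) :: (_, unit) term), inst (map tterm ts) \<xi>) \<in> step T2"
    using step.root[of q2 a "map tterm ts" \<xi> T2] r by simp
  ultimately show ?thesis unfolding produces_def trees_def
    by (meson converse_rtrancl_into_rtrancl mem_Collect_eq)
qed

definition good :: "('q2, 'g, 'h) tdtt \<Rightarrow> 'q2 set \<Rightarrow> 'g tree \<Rightarrow> bool" where
  "good T2 S t = (\<forall>q2\<in>S. \<exists>t'. produces T2 q2 t t')"

lemma domaut_cond:
  assumes wf: "wf_tdtt T2"
    and r: "(p, (a, k), \<xi>) \<in> rules (domaut T2)" and qx: "Q (good T2) \<xi> t"
  shows "good T2 p t"
proof -
  from r have "(\<exists>\<Gamma>. (a, k) \<in> inp T2 \<and> p \<subseteq> states T2 \<and>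
      (\<forall>q\<in>p. \<Gamma> q \<noteq> {} \<and> \<Gamma> q \<subseteq> rhs T2 q (a, k)) \<and>
      \<xi> = Fun a (map (\<lambda>i. Var (\<Union>q\<in>p. states_at (\<Gamma> q) i, i)) [0..<k])) \<or> p = {}"
    unfolding domaut_def by auto
  then show ?thesis
  proof (elim disjE exE conjE)
    fix \<Gamma>
    assume R: "(a, k) \<in> inp T2" "p \<subseteq> states T2"
      "\<forall>q\<in>p. \<Gamma> q \<noteq> {} \<and> \<Gamma> q \<subseteq> rhs T2 q (a, k)"
      and \<xi>: "\<xi> = Fun a (map (\<lambda>i. Var (\<Union>q\<in>p. states_at (\<Gamma> q) i, i)) [0..<k])"
    obtain g ts where t: "t = Node g ts" by (cases t)
    from qx have len: "length ts = k" and gi: "\<forall>i<k. good T2 (\<Union>q\<in>p. states_at (\<Gamma> q) i) (ts ! i)"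
      and ga: "g = a"
      unfolding \<xi> t by (auto simp: list_all2_conv_all_nth)
    show "good T2 p t" unfolding good_def
    proof
      fix q2 assume q2: "q2 \<in> p"
      with R obtain \<zeta> where z: "\<zeta> \<in> \<Gamma> q2" "\<zeta> \<in> rhs T2 q2 (a, k)" by blast
      hence rz: "(q2, (a, length ts), \<zeta>) \<in> rules T2" using len by (simp add: rhs_def)
      have wft: "wf_term (out T2) (states T2 \<times> {..<length ts}) \<zeta>"
        using wf rz unfolding wf_tdtt_def by fastforce
      hence vs: "vars_term \<zeta> \<subseteq> states T2 \<times> {..<length ts}" by (rule wf_vars)
      have "\<forall>(q', i)\<in>vars_term \<zeta>. \<exists>t'. produces T2 q' (ts ! i) t'"
      proof (clarify)
        fix q' i assume v: "(q', i) \<in> vars_term \<zeta>"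
        hence "i < k" using vs len by auto
        moreover have "q' \<in> (\<Union>q\<in>p. states_at (\<Gamma> q) i)"
          using v z q2 unfolding states_at_def by blast
        ultimately show "\<exists>t'. produces T2 q' (ts ! i) t'" using gi unfolding good_def by blast
      qed
      then show "\<exists>t'. produces T2 q2 t t'" using T2_produces[OF wf rz] t ga by simp
    qed
  qed (simp add: good_def)
qed

lemma fold_Q:
  assumes "\<forall>x\<in>vars_term \<zeta>. \<exists>p' q'' i. x = (p', Var (q'', i))"
  shows "Q (\<lambda>qp. good T2 (snd qp)) (subst fold_leaf \<zeta> :: ('g, ('q1 \<times> 'q2 set) \<times> nat) term) t
       = Q (good T2) (\<zeta> :: ('g, 'q2 set \<times> ('g, 'q1 \<times> nat) term) term) t"
  using assms
proof (induction \<zeta> arbitrary: t)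
  case (Var x)
  then obtain p' q'' i where "x = (p', Var (q'', i))" by auto
  then show ?case by (simp add: fold_leaf_def)
next
  case (Fun f us)
  obtain g ts where t: "t = Node g ts" by (cases t)
  have "list_all2 (Q (\<lambda>qp. good T2 (snd qp))) (map (subst fold_leaf) us) ts
        = list_all2 (Q (good T2)) us ts"
    using Fun by (auto simp: list_all2_conv_all_nth)
  then show ?case using t by simp
qed

theorem lemma2:
  fixes T1 :: "('q1, 'f, 'g) tdtt" and T2 :: "('q2, 'g, 'h) tdtt"
    and q :: 'q1 and S :: "'q2 set" and s :: "'f tree" and t :: "'g tree"
  assumes "wf_tdtt T1" and "wf_tdtt T2" and "inp T2 = out T1"
    and "(q, S) \<in> states (product T1 (domaut T2))"
    and "s \<in> trees (inp T1)" and "t \<in> trees (out T1)"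
    and "produces (product T1 (domaut T2)) (q, S) s t"
    and "S \<noteq> {}"
  shows "t \<in> (\<Inter>q2\<in>S. dom_st T2 q2)"
proof -
  let ?G = "\<lambda>qp. good T2 (snd qp)"
  have cond0: "?G qp t'" if r: "(qp, (a, k), \<xi>) \<in> rules (product T1 (domaut T2))"
    and qx: "Q ?G \<xi> t'" for qp a k \<xi> t'
  proof -
    from r obtain q0 p \<xi>0 \<zeta> where qp: "qp = (q0, p)" and x: "\<xi> = subst fold_leaf \<zeta>"
      and st: "(Var (p, \<xi>0), \<zeta>) \<in> (step (domaut T2))\<^sup>*"
      and vz: "\<forall>x\<in>vars_term \<zeta>. \<exists>p' q'' i. x = (p', Var (q'', i))"
      unfolding product_def by auto
    have "Q (good T2) \<zeta> t'" using qx fold_Q[OF vz, of T2 t'] x by simp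
    have dc: "\<forall>p a k \<xi> t. (p, (a, k), \<xi>) \<in> rules (domaut T2) \<longrightarrow> Q (good T2) \<xi> t \<longrightarrow> good T2 p t"
      using domaut_cond[OF assms(2)] by blast
    hence "Q (good T2) (Var (p, \<xi>0)) t'"
      using Q_steps[OF dc st] \<open>Q (good T2) \<zeta> t'\<close> by blast
    then show ?thesis using qp by simp
  qed
  have cond: "\<forall>p a k \<xi> t. (p, (a, k), \<xi>) \<in> rules (product T1 (domaut T2)) \<longrightarrow> Q ?G \<xi> t \<longrightarrow> ?G p t"
    using cond0 by blast
  from assms(7) have "(Var ((q, S), tterm s :: ('f, unit) term), tterm t) \<in> (step (product T1 (domaut T2)))\<^sup>*"
    unfolding produces_def by simp
  from Q_steps[OF cond this Q_tterm] have "good T2 S t" by simp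
  then show ?thesis using assms(3,6) unfolding dom_st_def good_def by auto
qed

end
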